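(* For every integer $n\ge 2$, $\theta_{n-1}(\ell_\infty,\ell_\infty)=\sqrt{n}^{\,n}$, i.e. $\max\{\|C_{n-1}(B)\|_\infty : B\in\mathbb{C}^{n\times n},\ \|\mathrm{col}_i(B)\|_\infty=1,\ i=1,\ldots,n\}=n^{n/2}$.
   Context: $C_k(B)$ is the $k$th compound of $B$: the $\binom nk\times\binom nk$ matrix of all $k\times k$ minors $\det B(\alpha|\beta)$, indexed by $k$-subsets of $\{1,\ldots,n\}$. $\mathrm{col}_i(B)$ is the $i$th column. $\|\cdot\|_\infty$ is the max-modulus vector norm and, for matrices, the induced operator norm (maximum absolute row sum). $\theta_k(\mu,\nu)=\max\{\mu(C_k(B)): \nu(\mathrm{col}_i(B))=1\ \forall i\}$. *)

theory Defs
  imports "Jordan_Normal_Form.Determinant" "Jordan_Normal_Form.DL_Submatrix"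
begin

definition ksubsets :: "nat \<Rightarrow> nat \<Rightarrow> nat set set" where
  "ksubsets n k = {S. S \<subseteq> {0..<n} \<and> card S = k}"

text \<open>Entry (alpha, beta) of the k-th compound: the minor det B(alpha|beta)
  (rows/columns taken in increasing order).\<close>
definition compound_entry :: "complex mat \<Rightarrow> nat set \<Rightarrow> nat set \<Rightarrow> complex" where
  "compound_entry B \<alpha> \<beta> = det (submatrix B \<alpha> \<beta>)"

text \<open>Induced infinity-norm (maximum absolute row sum) of the k-th compound C_k(B)
  of an n x n matrix B; rows and columns of C_k(B) indexed by k-subsets.\<close>
definition compound_inf_norm :: "nat \<Rightarrow> complex mat \<Rightarrow> real" where
  "compound_inf_norm k B =
     Max ((\<lambda>\<alpha>. \<Sum>\<beta>\<in>ksubsets (dim_row B) k. cmod (compound_entry B \<alpha> \<beta>))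
          ` ksubsets (dim_row B) k)"

definition col_inf_norm :: "complex mat \<Rightarrow> nat \<Rightarrow> real" where
  "col_inf_norm B i = Max ((\<lambda>j. cmod (B $$ (j, i))) ` {0..<dim_row B})"

text \<open>The set whose maximum is theta_k(l_inf, l_inf) for n x n matrices.\<close>
definition theta_inf_set :: "nat \<Rightarrow> nat \<Rightarrow> real set" where
  "theta_inf_set n k = {compound_inf_norm k B | B.
      B \<in> carrier_mat n n \<and> (\<forall>i<n. col_inf_norm B i = 1)}"

end

theory Submission
  imports Defs
begin


definition ipr :: "complex mat \<Rightarrow> nat \<Rightarrow> nat \<Rightarrow> complex" where
  "ipr M i j = (\<Sum>k<dim_col M. M $$ (i,k) * cnj (M $$ (j,k)))"

definition nrm2 :: "complex mat \<Rightarrow> nat \<Rightarrow> real" where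
  "nrm2 M i = (\<Sum>k<dim_col M. (cmod (M $$ (i,k)))^2)"

lemma ipr_self: "ipr M i i = of_real (nrm2 M i)"
  unfolding ipr_def nrm2_def of_real_sum complex_norm_square by (rule refl)

lemma ipr_swap: "ipr M j i = cnj (ipr M i j)"
  unfolding ipr_def by (simp add: cnj_sum mult.commute)

lemma nrm2_nonneg: "nrm2 M i \<ge> 0"
  unfolding nrm2_def by (simp add: sum_nonneg)

lemma nrm2_zero: assumes "nrm2 M j = 0" "k < dim_col M" shows "M $$ (j,k) = 0"
proof -
  have "\<forall>k\<in>{..<dim_col M}. (cmod (M $$ (j,k)))^2 = 0"
    using assms(1) unfolding nrm2_def by (subst sum_nonneg_eq_0_iff[symmetric]) auto
  thus ?thesis using assms(2) by auto
qed

lemma ipr_zero: assumes "nrm2 M j = 0" shows "ipr M i j = 0"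
  unfolding ipr_def using nrm2_zero[OF assms] by auto

definition rowadd :: "complex mat \<Rightarrow> nat \<Rightarrow> (nat \<Rightarrow> complex) \<Rightarrow> nat set \<Rightarrow> complex mat" where
  "rowadd M m c J = mat (dim_row M) (dim_col M)
     (\<lambda>(i,k). if i = m then M $$ (m,k) + (\<Sum>j\<in>J. c j * M $$ (j,k)) else M $$ (i,k))"

lemma det_rowadd:
  assumes M: "M \<in> carrier_mat n n" and J: "finite J" "m \<notin> J" "J \<subseteq> {..<n}" and m: "m < n"
  shows "det (rowadd M m c J) = det M"
  using J
proof (induction J rule: finite_induct)
  case empty
  have "rowadd M m c {} = M" using M unfolding rowadd_def by (intro eq_matI) auto
  then show ?case by simp
next
  case (insert j J)
  have jn: "j < n" and jm: "j \<noteq> m" using insert by auto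
  have "rowadd M m c (insert j J) = addrow (c j) m j (rowadd M m c J)"
    using M insert(1,2) jm jn unfolding rowadd_def mat_addrow_gen_def
    by (intro eq_matI) (auto simp: algebra_simps)
  moreover have "rowadd M m c J \<in> carrier_mat n n" using M unfolding rowadd_def by auto
  ultimately have "det (rowadd M m c (insert j J)) = det (rowadd M m c J)"
    using det_addrow[OF jn, of m] jm by auto
  then show ?case using insert by auto
qed

lemma cmod_diff_sq: "(cmod (a - b))^2 = (cmod a)^2 + (cmod b)^2 - 2 * Re (a * cnj b)"
  unfolding cmod_power2 by (simp add: power2_eq_square algebra_simps)

lemma gs_exists:
  assumes A: "A \<in> carrier_mat n n"
  shows "m \<le> n \<Longrightarrow> \<exists>M \<in> carrier_mat n n. det M = det A \<and>
     (\<forall>i<m. \<forall>j<m. i \<noteq> j \<longrightarrow> ipr M i j = 0) \<and> (\<forall>i<n. nrm2 M i \<le> nrm2 A i) \<and>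
     (\<forall>i k. m \<le> i \<longrightarrow> i < n \<longrightarrow> k < n \<longrightarrow> M $$ (i,k) = A $$ (i,k))"
proof (induction m)
  case 0
  show ?case using A by (intro bexI[of _ A]) auto
next
  case (Suc m)
  then obtain M where M: "M \<in> carrier_mat n n" and dM: "det M = det A"
    and orth: "\<forall>i<m. \<forall>j<m. i \<noteq> j \<longrightarrow> ipr M i j = 0"
    and nr: "\<forall>i<n. nrm2 M i \<le> nrm2 A i"
    and rest: "\<forall>i k. m \<le> i \<longrightarrow> i < n \<longrightarrow> k < n \<longrightarrow> M $$ (i,k) = A $$ (i,k)" by auto
  have mn: "m < n" using Suc by auto
  define c where "c j = (if nrm2 M j = 0 then 0 else - ipr M m j / of_real (nrm2 M j))" for j
  define M' where "M' = rowadd M m c {..<m}"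
  have M': "M' \<in> carrier_mat n n" using M unfolding M'_def rowadd_def by auto
  have dimM: "dim_row M = n" "dim_col M = n" using M by auto
  have dimM': "dim_row M' = n" "dim_col M' = n" using M' by auto
  have same: "M' $$ (i,k) = M $$ (i,k)" if "i \<noteq> m" "i < n" "k < n" for i k
    using that dimM unfolding M'_def rowadd_def by auto
  have newrow: "M' $$ (m,k) = M $$ (m,k) + (\<Sum>j<m. c j * M $$ (j,k))" if "k < n" for k
    using that dimM mn unfolding M'_def rowadd_def by auto
  have dM': "det M' = det A" unfolding M'_def using det_rowadd[OF M _ _ _ mn] mn dM by auto
  have iprM': "ipr M' i j = ipr M i j" if "i \<noteq> m" "j \<noteq> m" "i < n" "j < n" for i j
    unfolding ipr_def dimM dimM' using same that by auto
  have ortho_new: "ipr M' m j = 0" if j: "j < m" for j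
  proof -
    have "ipr M' m j = (\<Sum>k<n. (M $$ (m,k) + (\<Sum>l<m. c l * M $$ (l,k))) * cnj (M $$ (j,k)))"
      unfolding ipr_def dimM' using newrow same j mn by (intro sum.cong) auto
    also have "\<dots> = ipr M m j + (\<Sum>l<m. c l * ipr M l j)"
      unfolding ipr_def dimM
      by (simp add: distrib_right sum.distrib sum_distrib_left sum_distrib_right mult.assoc sum.swap[of _ "{..<m}"])
    also have "(\<Sum>l<m. c l * ipr M l j) = c j * ipr M j j"
    proof -
      have "(\<Sum>l<m. c l * ipr M l j) = c j * ipr M j j + (\<Sum>l\<in>{..<m}-{j}. c l * ipr M l j)"
        using j by (subst sum.remove[of _ j]) auto
      also have "(\<Sum>l\<in>{..<m}-{j}. c l * ipr M l j) = 0"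
        using orth j by (intro sum.neutral) auto
      finally show ?thesis by simp
    qed
    also have "ipr M m j + c j * ipr M j j = 0"
    proof (cases "nrm2 M j = 0")
      case True
      then show ?thesis using ipr_zero[OF True] by (simp add: c_def)
    next
      case False
      then show ?thesis unfolding c_def ipr_self by simp
    qed
    finally show ?thesis .
  qed
  have orth': "\<forall>i<Suc m. \<forall>j<Suc m. i \<noteq> j \<longrightarrow> ipr M' i j = 0"
  proof (intro allI impI)
    fix i j assume ij: "i < Suc m" "j < Suc m" "i \<noteq> j"
    show "ipr M' i j = 0"
    proof (cases "i = m")
      case True
      then show ?thesis using ortho_new ij by auto
    next
      case False
      note iF = False
      show ?thesis
      proof (cases "j = m")
        case True
        have "ipr M' i j = cnj (ipr M' j i)" by (rule ipr_swap)
        then show ?thesis using ortho_new[of i] ij iF True by auto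
      next
        case False
        then show ?thesis using iprM'[of i j] orth ij iF mn by auto
      qed
    qed
  qed
  have nrm_new: "nrm2 M' m \<le> nrm2 M m"
  proof -
    define v where "v k = M' $$ (m,k)" for k
    define u where "u k = (\<Sum>l<m. c l * M $$ (l,k))" for k
    have vu: "M $$ (m,k) = v k - u k" if "k < n" for k using newrow[OF that] unfolding v_def u_def by simp
    have cross: "(\<Sum>k<n. v k * cnj (u k)) = 0"
    proof -
      have "(\<Sum>k<n. v k * cnj (u k)) = (\<Sum>k<n. \<Sum>l<m. cnj (c l) * (v k * cnj (M' $$ (l,k))))"
        unfolding u_def cnj_sum using same mn
        by (intro sum.cong refl) (auto simp: sum_distrib_left algebra_simps)
      also have "\<dots> = (\<Sum>l<m. cnj (c l) * ipr M' m l)"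
        unfolding ipr_def dimM' v_def by (simp add: sum.swap[of _ "{..<n}"] sum_distrib_left)
      also have "\<dots> = 0" using ortho_new by simp
      finally show ?thesis .
    qed
    have "nrm2 M m = (\<Sum>k<n. (cmod (v k))^2 + (cmod (u k))^2 - 2 * Re (v k * cnj (u k)))"
      unfolding nrm2_def dimM using vu cmod_diff_sq by (intro sum.cong) auto
    also have "\<dots> = nrm2 M' m + (\<Sum>k<n. (cmod (u k))^2) - 2 * Re (\<Sum>k<n. v k * cnj (u k))"
      unfolding nrm2_def dimM' v_def by (simp add: sum.distrib sum_subtractf sum_distrib_left Re_sum)
    also have "\<dots> \<ge> nrm2 M' m" unfolding cross by (simp add: sum_nonneg)
    finally show ?thesis .
  qed
  have nr': "\<forall>i<n. nrm2 M' i \<le> nrm2 A i"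
  proof (intro allI impI)
    fix i assume i: "i < n"
    show "nrm2 M' i \<le> nrm2 A i"
    proof (cases "i = m")
      case True
      then show ?thesis using nrm_new nr i by force
    next
      case False
      then have "nrm2 M' i = nrm2 M i" unfolding nrm2_def dimM dimM' using same i by auto
      then show ?thesis using nr i by auto
    qed
  qed
  have rest': "\<forall>i k. Suc m \<le> i \<longrightarrow> i < n \<longrightarrow> k < n \<longrightarrow> M' $$ (i,k) = A $$ (i,k)"
    using same rest by auto
  show ?case using M' dM' orth' nr' rest' by blast
qed


interpretation cnj_hom: comm_ring_hom cnj
  by unfold_locales auto

lemma prod_list_upt_map: "prod_list (map f [0..<n]) = (\<Prod>i<n. f i)"
  by (simp add: prod.distinct_set_conv_list[symmetric] atLeast0LessThan)

lemma det_orth_rows: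
  assumes M: "M \<in> carrier_mat n n" and orth: "\<forall>i<n. \<forall>j<n. i \<noteq> j \<longrightarrow> ipr M i j = 0"
  shows "(cmod (det M))^2 = (\<Prod>i<n. nrm2 M i)"
proof -
  define Mh where "Mh = transpose_mat (map_mat cnj M)"
  have Mh: "Mh \<in> carrier_mat n n" using M unfolding Mh_def by auto
  have dMh: "det Mh = cnj (det M)"
  proof -
    have "map_mat cnj M \<in> carrier_mat n n" using M by simp
    then have "det Mh = det (map_mat cnj M)" unfolding Mh_def by (rule det_transpose)
    then show ?thesis by (simp only: cnj_hom.hom_det)
  qed
  have prod: "M * Mh = mat n n (\<lambda>(i,j). ipr M i j)"
    using M unfolding Mh_def ipr_def
    by (intro eq_matI) (auto simp: scalar_prod_def atLeast0LessThan)
  have ut: "upper_triangular (M * Mh)" unfolding prod upper_triangular_def using orth by auto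
  have "det (M * Mh) = prod_list (diag_mat (M * Mh))"
    by (rule det_upper_triangular[OF ut]) (use M Mh in auto)
  also have "\<dots> = (\<Prod>i<n. ipr M i i)"
    unfolding prod diag_mat_def using M by (simp add: prod_list_upt_map)
  also have "\<dots> = of_real (\<Prod>i<n. nrm2 M i)" by (simp add: ipr_self)
  finally have "det M * cnj (det M) = of_real (\<Prod>i<n. nrm2 M i)"
    using det_mult[OF M Mh] dMh by simp
  then have "of_real ((cmod (det M))^2) = (of_real (\<Prod>i<n. nrm2 M i) :: complex)"
    by (simp only: complex_norm_square)
  then show ?thesis using of_real_eq_iff by blast
qed

lemma hadamard_rows:
  assumes A: "A \<in> carrier_mat n n"
  shows "(cmod (det A))^2 \<le> (\<Prod>i<n. nrm2 A i)"
proof -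
  obtain M where M: "M \<in> carrier_mat n n" and dM: "det M = det A"
    and orth: "\<forall>i<n. \<forall>j<n. i \<noteq> j \<longrightarrow> ipr M i j = 0"
    and nr: "\<forall>i<n. nrm2 M i \<le> nrm2 A i"
    using gs_exists[OF A, of n] by auto
  have "(cmod (det A))^2 = (\<Prod>i<n. nrm2 M i)" using det_orth_rows[OF M orth] dM by simp
  also have "\<dots> \<le> (\<Prod>i<n. nrm2 A i)" using nr by (intro prod_mono) (auto simp: nrm2_nonneg)
  finally show ?thesis .
qed

lemma det_bound:
  assumes A: "A \<in> carrier_mat n n" and b: "\<And>i k. i < n \<Longrightarrow> k < n \<Longrightarrow> cmod (A $$ (i,k)) \<le> 1"
  shows "cmod (det A) \<le> sqrt (real n) ^ n"
proof -
  have "nrm2 A i \<le> real n" if i: "i < n" for i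
  proof -
    have dA: "dim_col A = n" using A by auto
    have "nrm2 A i \<le> (\<Sum>k<n. 1)" unfolding nrm2_def dA
      by (intro sum_mono) (simp add: power_le_one b i)
    then show ?thesis by simp
  qed
  then have "(\<Prod>i<n. nrm2 A i) \<le> (\<Prod>i<n. real n)" by (intro prod_mono) (auto simp: nrm2_nonneg)
  moreover have "(sqrt (real n) ^ n)^2 = (\<Prod>i<n. real n)"
    by (metis power_mult mult.commute real_sqrt_pow2 of_nat_0_le_iff prod_constant card_lessThan)
  ultimately have "(cmod (det A))^2 \<le> (sqrt (real n) ^ n)^2"
    using hadamard_rows[OF A] by linarith
  then show ?thesis by (rule power2_le_imp_le) simp
qed


lemma pick_compl:
  assumes i: "i < n" and k: "k < n - 1"
  shows "pick ({0..<n} - {i}) k = insert_index i k"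
proof -
  let ?I = "{0..<n} - {i}"
  let ?x = "insert_index i k"
  have xI: "?x \<in> ?I" using i k by (auto simp: insert_index_def)
  have "card {a \<in> ?I. a < ?x} = k"
  proof (cases "k < i")
    case True
    then have "{a \<in> ?I. a < ?x} = {0..<k}" using i by (auto simp: insert_index_def)
    then show ?thesis by simp
  next
    case False
    then have "{a \<in> ?I. a < ?x} = {0..<Suc k} - {i}" using i k by (auto simp: insert_index_def)
    then show ?thesis using False by simp
  qed
  then show ?thesis using pick_card_in_set[OF xI] by simp
qed

lemma submatrix_compl:
  assumes B: "B \<in> carrier_mat n n" and i: "i < n" and j: "j < n"
  shows "submatrix B ({0..<n} - {i}) ({0..<n} - {j}) = mat_delete B i j"
proof -
  have c: "card {r. r < n \<and> r \<noteq> x} = n - Suc 0" if "x < n" for x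
  proof -
    have "{r. r < n \<and> r \<noteq> x} = {0..<n} - {x}" by auto
    then show ?thesis using that by simp
  qed
  have pi: "pick ({0..<n} - {i}) a = insert_index i a" if "a < n - Suc 0" for a
    using pick_compl[OF i] that by simp
  have pj: "pick ({0..<n} - {j}) a = insert_index j a" if "a < n - Suc 0" for a
    using pick_compl[OF j] that by simp
  show ?thesis
    using B unfolding submatrix_def mat_delete_def
    by (intro eq_matI) (auto simp: c i j pi pj insert_index_def)
qed

lemma ksubsets_compl:
  assumes n: "n \<ge> 1"
  shows "ksubsets n (n - 1) = (\<lambda>i. {0..<n} - {i}) ` {..<n}"
proof
  show "(\<lambda>i. {0..<n} - {i}) ` {..<n} \<subseteq> ksubsets n (n - 1)"
    unfolding ksubsets_def by auto
next
  show "ksubsets n (n - 1) \<subseteq> (\<lambda>i. {0..<n} - {i}) ` {..<n}"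
  proof
    fix S assume "S \<in> ksubsets n (n - 1)"
    then have S: "S \<subseteq> {0..<n}" "card S = n - 1" unfolding ksubsets_def by auto
    have "card ({0..<n} - S) = 1" using S n by (simp add: card_Diff_subset finite_subset)
    then obtain i where i: "{0..<n} - S = {i}" by (rule card_1_singletonE)
    then have "i < n" by auto
    moreover have "S = {0..<n} - {i}" using i S by auto
    ultimately show "S \<in> (\<lambda>i. {0..<n} - {i}) ` {..<n}" by auto
  qed
qed

lemma inj_compl: "inj_on (\<lambda>i. {0..<n::nat} - {i}) {..<n}"
proof (rule inj_onI)
  fix x y assume x: "x \<in> {..<n}" and e: "{0..<n} - {x} = {0..<n} - {y}"
  show "x = y"
  proof (rule ccontr)
    assume "x \<noteq> y"
    then have "x \<in> {0..<n} - {y}" using x by auto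
    then have "x \<in> {0..<n} - {x}" using e by blast
    then show False by blast
  qed
qed

definition rs :: "complex mat \<Rightarrow> nat \<Rightarrow> real" where
  "rs B i = (\<Sum>j<dim_row B. cmod (det (mat_delete B i j)))"

lemma compound_norm_eq:
  assumes B: "B \<in> carrier_mat n n" and n: "n \<ge> 1"
  shows "compound_inf_norm (n - 1) B = Max (rs B ` {..<n})"
proof -
  have dB: "dim_row B = n" using B by auto
  have "(\<lambda>\<alpha>. \<Sum>\<beta>\<in>ksubsets n (n - 1). cmod (compound_entry B \<alpha> \<beta>)) ` ksubsets n (n - 1)
        = rs B ` {..<n}"
  proof -
    have "(\<Sum>\<beta>\<in>ksubsets n (n - 1). cmod (compound_entry B ({0..<n} - {i}) \<beta>)) = rs B i"
      if i: "i < n" for i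
      unfolding ksubsets_compl[OF n] rs_def dB compound_entry_def
      by (subst sum.reindex[OF inj_compl]) (auto simp: submatrix_compl[OF B i] intro!: sum.cong)
    then show ?thesis unfolding ksubsets_compl[OF n] image_image by (auto intro!: image_cong)
  qed
  then show ?thesis unfolding compound_inf_norm_def dB by simp
qed


lemma col_bound:
  assumes B: "B \<in> carrier_mat n n" and c: "\<forall>i<n. col_inf_norm B i = 1"
    and r: "r < n" and k: "k < n"
  shows "cmod (B $$ (r,k)) \<le> 1"
proof -
  have "cmod (B $$ (r,k)) \<le> col_inf_norm B k"
    unfolding col_inf_norm_def using B r by (intro Max_ge) auto
  then show ?thesis using c k by auto
qed

lemma cof_norm: "cmod (cofactor A i j) = cmod (det (mat_delete A i j))"
  unfolding cofactor_def by (simp add: norm_mult norm_power)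

lemma rs_bound:
  assumes B: "B \<in> carrier_mat n n" and c: "\<forall>i<n. col_inf_norm B i = 1" and i: "i < n"
  shows "rs B i \<le> sqrt (real n) ^ n"
proof -
  define z where "z k = (if cofactor B i k = 0 then 1 else cnj (cofactor B i k) / of_real (cmod (cofactor B i k)))" for k
  define B' where "B' = mat n n (\<lambda>(r,k). if r = i then z k else B $$ (r,k))"
  have B': "B' \<in> carrier_mat n n" unfolding B'_def by auto
  have del: "mat_delete B' i k = mat_delete B i k" for k
    using B unfolding B'_def mat_delete_def by (intro eq_matI) auto
  have zc: "z k * cofactor B i k = of_real (cmod (cofactor B i k))" for k
  proof (cases "cofactor B i k = 0")
    case True then show ?thesis by (simp add: z_def)
  next
    case False
    then have "cmod (cofactor B i k) \<noteq> 0" by simp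
    then show ?thesis using False unfolding z_def
      by (simp add: field_simps mult.commute[of "cnj _"] complex_norm_square[symmetric] power2_eq_square)
  qed
  have "det B' = (\<Sum>k<n. B' $$ (i,k) * cofactor B' i k)" by (rule laplace_expansion_row[OF B' i])
  also have "\<dots> = (\<Sum>k<n. of_real (cmod (cofactor B i k)))"
    using i unfolding cofactor_def del by (intro sum.cong) (auto simp: B'_def zc[unfolded cofactor_def])
  also have "\<dots> = of_real (rs B i)" unfolding rs_def using B by (simp add: cof_norm)
  finally have "cmod (det B') = \<bar>rs B i\<bar>" by (simp only: norm_of_real)
  moreover have "rs B i \<ge> 0" unfolding rs_def by (simp add: sum_nonneg)
  ultimately have "cmod (det B') = rs B i" by simp
  moreover have "cmod (det B') \<le> sqrt (real n) ^ n"
  proof (rule det_bound[OF B'])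
    fix r k assume rk: "r < n" "k < n"
    show "cmod (B' $$ (r,k)) \<le> 1"
    proof (cases "r = i")
      case True
      have "cmod (z k) \<le> 1" unfolding z_def by (simp add: norm_divide)
      then show ?thesis using True rk unfolding B'_def by simp
    next
      case False
      then show ?thesis using rk col_bound[OF B c] unfolding B'_def by simp
    qed
  qed
  ultimately show ?thesis by simp
qed


definition fourier :: "nat \<Rightarrow> complex mat" where
  "fourier n = mat n n (\<lambda>(j,k). cis (2 * pi * real j * real k / real n))"

lemma fourier_sum:
  assumes j: "j < n" and l: "l < n"
  shows "(\<Sum>k<n. cis (2 * pi * real j * real k / real n) * cnj (cis (2 * pi * real l * real k / real n)))
         = (if j = l then of_nat n else 0)"
proof -
  define q where "q = cis (2 * pi * (real j - real l) / real n)"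
  have n: "n > 0" using j by auto
  have tm: "cis (2 * pi * real j * real k / real n) * cnj (cis (2 * pi * real l * real k / real n)) = q ^ k" for k
    unfolding q_def DeMoivre cis_cnj cis_mult
    by (rule arg_cong[where f=cis]) (simp add: field_simps diff_divide_distrib)
  have "(\<Sum>k<n. cis (2 * pi * real j * real k / real n) * cnj (cis (2 * pi * real l * real k / real n)))
        = (\<Sum>k<n. q ^ k)" using tm by simp
  also have "\<dots> = (if j = l then of_nat n else 0)"
  proof (cases "j = l")
    case True
    then have "q = 1" unfolding q_def by simp
    then show ?thesis using True by simp
  next
    case False
    have qn: "q ^ n = 1"
    proof -
      have "q ^ n = cis (2 * pi * (real j - real l))" unfolding q_def DeMoivre using n
        by (intro arg_cong[where f=cis]) (simp add: field_simps)
      also have "real j - real l = of_int (int j - int l)" by simp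
      also have "cis (2 * pi * \<dots>) = 1" by (rule cis_multiple_2pi) simp
      finally show ?thesis .
    qed
    have q1: "q \<noteq> 1"
    proof
      assume "q = 1"
      then have "cos (2 * pi * (real j - real l) / real n) = 1" unfolding q_def
        by (metis Re_complex_of_real cis.sel(1) of_real_1)
      then obtain m :: int where m: "2 * pi * (real j - real l) / real n = of_int m * (2 * pi)"
        by (auto simp: cos_one_2pi_int)
      have d: "real j - real l = of_int m * real n"
      proof -
        have "2 * pi * (real j - real l) = (of_int m * (2 * pi)) * real n"
          using m n by (simp add: divide_eq_eq)
        then have "(2 * pi) * (real j - real l) = (2 * pi) * (of_int m * real n)"
          by (simp only: ac_simps)
        then show ?thesis using pi_gt_zero by simp
      qed
      have "m \<noteq> 0" using d False by auto
      then consider "m \<ge> 1" | "m \<le> -1" by linarith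
      then show False
      proof cases
        case 1
        then have "of_int m * real n \<ge> real n" using n by (simp add: mult_right_mono)
        then show ?thesis using d j by linarith
      next
        case 2
        then have "of_int m * real n \<le> - real n"
          using mult_right_mono[of "of_int m" "-1" "real n"] by simp
        then show ?thesis using d l by linarith
      qed
    qed
    show ?thesis using False q1 qn by (simp add: geometric_sum)
  qed
  finally show ?thesis .
qed

lemma fourier_carrier: "fourier n \<in> carrier_mat n n" unfolding fourier_def by auto

lemma fourier_ipr: assumes "i < n" "j < n" shows "ipr (fourier n) i j = (if i = j then of_nat n else 0)"
  unfolding ipr_def using assms fourier_sum[OF assms]
  by (simp add: fourier_def)

lemma fourier_det: assumes n: "n > 0" shows "cmod (det (fourier n)) = sqrt (real n) ^ n"
proof -
  have "(cmod (det (fourier n)))^2 = (\<Prod>i<n. nrm2 (fourier n) i)"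
    by (rule det_orth_rows[OF fourier_carrier]) (auto simp: fourier_ipr)
  also have "\<dots> = (\<Prod>i<n. real n)"
  proof (rule prod.cong[OF refl])
    fix i assume "i \<in> {..<n}"
    then have "of_real (nrm2 (fourier n) i) = (of_nat n :: complex)" using fourier_ipr[of i n i] ipr_self by simp
    then show "nrm2 (fourier n) i = real n" by (metis of_real_eq_iff of_real_of_nat_eq)
  qed
  also have "\<dots> = (sqrt (real n) ^ n)^2"
    by (metis power_mult mult.commute real_sqrt_pow2 of_nat_0_le_iff prod_constant card_lessThan)
  finally show ?thesis by (metis norm_ge_zero power2_eq_iff_nonneg real_sqrt_ge_zero zero_le_power of_nat_0_le_iff)
qed

lemma fourier_rs: assumes i: "i < n" shows "rs (fourier n) i = cmod (det (fourier n))"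
proof -
  let ?F = "fourier n"
  let ?Fh = "transpose_mat (map_mat cnj ?F)"
  have F: "?F \<in> carrier_mat n n" by (rule fourier_carrier)
  have Fh: "?Fh \<in> carrier_mat n n" by (simp add: fourier_def)
  have FFh: "?F * ?Fh = of_nat n \<cdot>\<^sub>m 1\<^sub>m n"
    by (intro eq_matI) (auto simp: fourier_def scalar_prod_def atLeast0LessThan fourier_sum)
  have adj: "adj_mat ?F \<in> carrier_mat n n" "adj_mat ?F * ?F = det ?F \<cdot>\<^sub>m 1\<^sub>m n" using adj_mat[OF F] by auto
  have "of_nat n \<cdot>\<^sub>m adj_mat ?F = adj_mat ?F * (?F * ?Fh)"
    unfolding FFh mult_smult_distrib[OF adj(1) one_carrier_mat] right_mult_one_mat[OF adj(1)] by simp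
  also have "\<dots> = (adj_mat ?F * ?F) * ?Fh" using adj(1) F Fh by (simp add: assoc_mult_mat[of _ n n _ n _ n])
  also have "\<dots> = det ?F \<cdot>\<^sub>m ?Fh" unfolding adj(2) using Fh by (simp add: mult_smult_assoc_mat[of _ n n])
  finally have eq: "of_nat n \<cdot>\<^sub>m adj_mat ?F = det ?F \<cdot>\<^sub>m ?Fh" .
  have "cmod (det (mat_delete ?F i k)) = cmod (det ?F) / real n" if k: "k < n" for k
  proof -
    have "(of_nat n \<cdot>\<^sub>m adj_mat ?F) $$ (k,i) = (det ?F \<cdot>\<^sub>m ?Fh) $$ (k,i)" using eq by simp
    then have "of_nat n * cofactor ?F i k = det ?F * cnj (?F $$ (i,k))"
      using i k F adj(1) by (simp add: adj_mat_def)
    then have "cmod (of_nat n * cofactor ?F i k) = cmod (det ?F * cnj (?F $$ (i,k)))" by simp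
    moreover have "cmod (?F $$ (i,k)) = 1" using i k by (simp add: fourier_def)
    ultimately have "real n * cmod (cofactor ?F i k) = cmod (det ?F)"
      by (simp only: norm_mult norm_of_nat complex_mod_cnj mult_1_right)
    then show ?thesis using k by (simp add: cof_norm field_simps)
  qed
  then have "rs ?F i = (\<Sum>k<n. cmod (det ?F) / real n)" unfolding rs_def using F by simp
  also have "\<dots> = cmod (det ?F)" using i by simp
  finally show ?thesis .
qed

theorem theorem2p11:
  fixes n :: nat
  assumes "n \<ge> 2"
  shows "sqrt (real n) ^ n \<in> theta_inf_set n (n - 1)
         \<and> (\<forall>x \<in> theta_inf_set n (n - 1). x \<le> sqrt (real n) ^ n)"
proof
  have n1: "n \<ge> 1" and n0: "n > 0" using assms by auto
  let ?F = "fourier n"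
  have cols: "\<forall>i<n. col_inf_norm ?F i = 1"
  proof (intro allI impI)
    fix i assume i: "i < n"
    have dF: "dim_row ?F = n" by (simp add: fourier_def)
    have "(\<lambda>j. cmod (?F $$ (j, i))) ` {0..<dim_row ?F} = (\<lambda>j. 1) ` {0..<n}"
      unfolding dF by (rule image_cong[OF refl]) (simp add: fourier_def i)
    also have "\<dots> = {1}" using n0 by (simp add: image_constant_conv)
    finally have "(\<lambda>j. cmod (?F $$ (j, i))) ` {0..<dim_row ?F} = {1}" .
    then show "col_inf_norm ?F i = 1" unfolding col_inf_norm_def by simp
  qed
  have "compound_inf_norm (n - 1) ?F = Max (rs ?F ` {..<n})"
    by (rule compound_norm_eq[OF fourier_carrier n1])
  also have "rs ?F ` {..<n} = (\<lambda>i. sqrt (real n) ^ n) ` {..<n}"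
    by (rule image_cong[OF refl]) (simp add: fourier_rs fourier_det[OF n0])
  also have "\<dots> = {sqrt (real n) ^ n}"
  proof -
    have "{..<n} \<noteq> {}" using n0 by auto
    then show ?thesis by (simp add: image_constant_conv)
  qed
  finally have cF: "compound_inf_norm (n - 1) ?F = sqrt (real n) ^ n" by simp
  show "sqrt (real n) ^ n \<in> theta_inf_set n (n - 1)"
  proof -
    have "sqrt (real n) ^ n = compound_inf_norm (n - 1) ?F \<and> ?F \<in> carrier_mat n n
          \<and> (\<forall>i<n. col_inf_norm ?F i = 1)"
      using cF fourier_carrier[of n] cols by (intro conjI) simp_all
    then show ?thesis unfolding theta_inf_set_def by (intro CollectI exI[of _ ?F])
  qed
next
  have n1: "n \<ge> 1" using assms by auto
  show "\<forall>x \<in> theta_inf_set n (n - 1). x \<le> sqrt (real n) ^ n"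
  proof
    fix x assume "x \<in> theta_inf_set n (n - 1)"
    then obtain B where x: "x = compound_inf_norm (n - 1) B" and B: "B \<in> carrier_mat n n"
      and c: "\<forall>i<n. col_inf_norm B i = 1" unfolding theta_inf_set_def by auto
    have "x = Max (rs B ` {..<n})" using compound_norm_eq[OF B n1] x by simp
    also have "\<dots> \<le> sqrt (real n) ^ n"
    proof (rule Max.boundedI)
      show "finite (rs B ` {..<n})" by simp
      have "0 \<in> {..<n}" using n1 by simp
      then show "rs B ` {..<n} \<noteq> {}" by blast
      show "\<And>a. a \<in> rs B ` {..<n} \<Longrightarrow> a \<le> sqrt (real n) ^ n" using rs_bound[OF B c] by blast
    qed
    finally show "x \<le> sqrt (real n) ^ n" .
  qed
qed


end
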